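(* Let $T_1,T_2$ be tables joined on column $J$ with frequencies $a_v,b_v$ ($v\in\mathcal U$), let $\epsilon_1,\epsilon_2\in(0,1]$ and $p\in[\max\{\epsilon_1,\epsilon_2\},1]$. If $S_1=\mathrm{UBS}_{p,\epsilon_1/p}(T_1,J)$ and $S_2=\mathrm{UBS}_{p,\epsilon_2/p}(T_2,J)$ and $\hat J_{\mathrm{count}}=\frac{p}{\epsilon_1\epsilon_2}|S_1\bowtie_J S_2|$, then $$\mathrm{Var}[\hat J_{\mathrm{count}}] = \Big(\frac1p-1\Big)\gamma_{2,2} + \Big(\frac1{\epsilon_2}-\frac1p\Big)\gamma_{2,1} + \Big(\frac1{\epsilon_1}-\frac1p\Big)\gamma_{1,2} + \Big(\frac{p}{\epsilon_1\epsilon_2}-\frac1{\epsilon_1}-\frac1{\epsilon_2}+\frac1p\Big)\gamma_{1,1},$$ where $\gamma_{i,j}=\sum_{v\in\mathcal U}a_v^ib_v^j$.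
   Context: $T_1,T_2$ are finite multisets of tuples with a join attribute $J$ taking values in a finite set $\mathcal U$; $a_v$ (resp. $b_v$) is the number of tuples of $T_1$ (resp. $T_2$) with $J$-value $v$. $S_1\bowtie_J S_2$ is the set of pairs $(t_1,t_2)\in S_1\times S_2$ with $t_1.J=t_2.J$. $\mathrm{UBS}_{p,q}(T,J)$: given a hash function $h:\mathcal U\to[0,1]$, each tuple $t\in T$ with $h(t.J)<p$ is included independently with probability $q$; others are excluded. The values $h(v)$ are independent uniform on $[0,1]$, the same $h$ is used for both tables, and the Bernoulli coins are independent across all tuples and independent of $h$. (Note $\hat J_{\mathrm{count}}=|S_1\bowtie_J S_2|/(p q_1 q_2)$ with $q_i=\epsilon_i/p$.) *)

theory Defs
  imports "HOL-Probability.Probability"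
begin

text \<open>A table is a finite family of tuples \<open>T :: 'i \<Rightarrow> 't\<close> indexed by a finite
  set \<open>I\<close> of tuple occurrences (so duplicate tuples of the multiset are distinct
  occurrences); \<open>J :: 't \<Rightarrow> 'u\<close> extracts the join attribute.\<close>

definition freq :: "'i set \<Rightarrow> ('i \<Rightarrow> 't) \<Rightarrow> ('t \<Rightarrow> 'u) \<Rightarrow> 'u \<Rightarrow> nat" where
  "freq I T J v = card {i \<in> I. J (T i) = v}"

definition UBS :: "real \<Rightarrow> ('u \<Rightarrow> real) \<Rightarrow> ('i \<Rightarrow> bool) \<Rightarrow> 'i set \<Rightarrow> ('i \<Rightarrow> 't) \<Rightarrow> ('t \<Rightarrow> 'u) \<Rightarrow> 'i set" where
  "UBS p h c I T J = {i \<in> I. h (J (T i)) < p \<and> c i}"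

definition join :: "'i set \<Rightarrow> ('i \<Rightarrow> 't) \<Rightarrow> 'k set \<Rightarrow> ('k \<Rightarrow> 't) \<Rightarrow> ('t \<Rightarrow> 'u) \<Rightarrow> ('i \<times> 'k) set" where
  "join S1 T1 S2 T2 J = {(i, k) \<in> S1 \<times> S2. J (T1 i) = J (T2 k)}"

text \<open>Probability space: independent uniform hash values on \<open>[0,1]\<close> for each \<open>v \<in> U\<close>,
  and independent Bernoulli(q1) / Bernoulli(q2) coins for the tuples of \<open>T1\<close> / \<open>T2\<close>.\<close>
definition sample_space ::
  "'u set \<Rightarrow> 'i set \<Rightarrow> real \<Rightarrow> 'k set \<Rightarrow> real \<Rightarrow> ((('u \<Rightarrow> real) \<times> ('i \<Rightarrow> bool)) \<times> ('k \<Rightarrow> bool)) measure" where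
  "sample_space U I1 q1 I2 q2 =
     (PiM U (\<lambda>_. uniform_measure lborel {0..1::real})
       \<Otimes>\<^sub>M PiM I1 (\<lambda>_. measure_pmf (bernoulli_pmf q1)))
       \<Otimes>\<^sub>M PiM I2 (\<lambda>_. measure_pmf (bernoulli_pmf q2))"

definition var :: "'a measure \<Rightarrow> ('a \<Rightarrow> real) \<Rightarrow> real" where
  "var M X = integral\<^sup>L M (\<lambda>x. (X x - integral\<^sup>L M X)\<^sup>2)"

end

theory Submission
  imports Defs
begin

lemma pair_int:
  fixes f :: "'a \<Rightarrow> real" and g :: "'b \<Rightarrow> real"
  assumes "prob_space M1" "prob_space M2" "integrable M1 f" "integrable M2 g"
    "\<And>x. \<bar>f x\<bar> \<le> B1" "\<And>y. \<bar>g y\<bar> \<le> B2"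
  shows "integrable (M1 \<Otimes>\<^sub>M M2) (\<lambda>(x,y). f x * g y)"
    and "integral\<^sup>L (M1 \<Otimes>\<^sub>M M2) (\<lambda>(x,y). f x * g y) = integral\<^sup>L M1 f * integral\<^sup>L M2 g"
proof -
  interpret P1: prob_space M1 by fact
  interpret P2: prob_space M2 by fact
  interpret P: pair_prob_space M1 M2 by unfold_locales
  have m: "(\<lambda>(x,y). f x * g y) \<in> borel_measurable (M1 \<Otimes>\<^sub>M M2)"
    using borel_measurable_integrable[OF assms(3)] borel_measurable_integrable[OF assms(4)] by measurable
  show i: "integrable (M1 \<Otimes>\<^sub>M M2) (\<lambda>(x,y). f x * g y)"
  proof (rule P.integrable_const_bound[where B="B1*B2"])
    show "AE x in M1 \<Otimes>\<^sub>M M2. norm (case x of (x, y) \<Rightarrow> f x * g y) \<le> B1 * B2"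
    proof (rule AE_I2, clarsimp split: prod.split)
      fix x y
      have "0 \<le> B2" using order_trans[OF abs_ge_zero assms(6)] .
      have "0 \<le> B1" using order_trans[OF abs_ge_zero assms(5)] .
      then show "\<bar>f x * g y\<bar> \<le> B1 * B2"
        unfolding abs_mult using assms(5,6) by (intro mult_mono) auto
    qed
  qed (rule m)
  have "integral\<^sup>L (M1 \<Otimes>\<^sub>M M2) (\<lambda>(x,y). f x * g y) = (\<integral>x. (\<integral>y. f x * g y \<partial>M2) \<partial>M1)"
    using P.integral_fst[OF i] by simp
  also have "\<dots> = integral\<^sup>L M1 f * integral\<^sup>L M2 g" by simp
  finally show "integral\<^sup>L (M1 \<Otimes>\<^sub>M M2) (\<lambda>(x,y). f x * g y) = integral\<^sup>L M1 f * integral\<^sup>L M2 g" .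
qed

lemma PiM_prod_pow:
  fixes g :: "'a \<Rightarrow> real"
  assumes "finite I" "S \<subseteq> I" "prob_space N" "integrable N g"
  shows "(\<integral>x. (\<Prod>j\<in>S. g (x j)) \<partial>PiM I (\<lambda>_. N)) = (integral\<^sup>L N g) ^ card S"
    and "integrable (PiM I (\<lambda>_. N)) (\<lambda>x. \<Prod>j\<in>S. g (x j))"
proof -
  interpret N: prob_space N by fact
  interpret product_sigma_finite "\<lambda>_. N" by unfold_locales
  have intg: "integrable N (\<lambda>y. if j \<in> S then g y else 1)" for j
    by (cases "j \<in> S") (simp_all add: assms(4))
  have "(\<integral>x. (\<Prod>j\<in>S. g (x j)) \<partial>PiM I (\<lambda>_. N)) =
        (\<integral>x. (\<Prod>j\<in>I. (\<lambda>j y. if j \<in> S then g y else 1) j (x j)) \<partial>PiM I (\<lambda>_. N))"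
    using assms(1,2) by (simp add: prod.inter_restrict[symmetric] Int_absorb1)
  also have "\<dots> = (\<Prod>j\<in>I. integral\<^sup>L N (\<lambda>y. if j \<in> S then g y else 1))"
    by (rule product_integral_prod) (use assms intg in auto)
  also have "\<dots> = (\<Prod>j\<in>I. if j \<in> S then integral\<^sup>L N g else 1)"
    by (intro prod.cong) (auto simp: N.prob_space)
  also have "\<dots> = (integral\<^sup>L N g) ^ card S"
    using assms(1,2) by (simp add: prod.inter_restrict[symmetric] Int_absorb1)
  finally show "(\<integral>x. (\<Prod>j\<in>S. g (x j)) \<partial>PiM I (\<lambda>_. N)) = (integral\<^sup>L N g) ^ card S" .
  have "integrable (PiM I (\<lambda>_. N)) (\<lambda>x. \<Prod>j\<in>I. (\<lambda>j y. if j \<in> S then g y else 1) j (x j))"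
    by (rule product_integrable_prod) (use assms intg in auto)
  moreover have "(\<lambda>x. \<Prod>j\<in>I. (\<lambda>j y. if j \<in> S then g y else 1) j (x j)) = (\<lambda>x. \<Prod>j\<in>S. g (x j))"
    using assms(1,2) by (simp add: prod.inter_restrict[symmetric] Int_absorb1)
  ultimately show "integrable (PiM I (\<lambda>_. N)) (\<lambda>x. \<Prod>j\<in>S. g (x j))" by simp
qed

lemma triple_int:
  fixes F :: "'a \<Rightarrow> real" and G :: "'b \<Rightarrow> real" and H :: "'c \<Rightarrow> real"
  assumes "prob_space N" "prob_space P1" "prob_space P2"
    "integrable N F" "integrable P1 G" "integrable P2 H"
    "\<And>x. \<bar>F x\<bar> \<le> B1" "\<And>y. \<bar>G y\<bar> \<le> B2" "\<And>z. \<bar>H z\<bar> \<le> B3"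
  shows "integrable ((N \<Otimes>\<^sub>M P1) \<Otimes>\<^sub>M P2) (\<lambda>((h,c1),c2). F h * G c1 * H c2)"
    and "integral\<^sup>L ((N \<Otimes>\<^sub>M P1) \<Otimes>\<^sub>M P2) (\<lambda>((h,c1),c2). F h * G c1 * H c2)
         = integral\<^sup>L N F * integral\<^sup>L P1 G * integral\<^sup>L P2 H"
proof -
  have eq: "(\<lambda>((h,c1),c2). F h * G c1 * H c2) = (\<lambda>(x,y). (\<lambda>(h,c1). F h * G c1) x * H y)"
    by auto
  have NP: "prob_space (N \<Otimes>\<^sub>M P1)"
    using assms(1,2) by (simp add: prob_space_pair)
  have "\<bar>(\<lambda>(h,c1). F h * G c1) x\<bar> \<le> B1 * B2" for x
  proof -
    have "0 \<le> B1" using order_trans[OF abs_ge_zero assms(7)] .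
    then show ?thesis unfolding abs_mult case_prod_unfold using assms(7,8)
      by (intro mult_mono) auto
  qed
  note b = this
  show i: "integrable ((N \<Otimes>\<^sub>M P1) \<Otimes>\<^sub>M P2) (\<lambda>((h,c1),c2). F h * G c1 * H c2)"
    unfolding eq by (rule pair_int(1)[OF NP assms(3) pair_int(1)[OF assms(1,2,4,5,7,8)] assms(6) b assms(9)])
  show "integral\<^sup>L ((N \<Otimes>\<^sub>M P1) \<Otimes>\<^sub>M P2) (\<lambda>((h,c1),c2). F h * G c1 * H c2)
         = integral\<^sup>L N F * integral\<^sup>L P1 G * integral\<^sup>L P2 H"
    unfolding eq pair_int(2)[OF NP assms(3) pair_int(1)[OF assms(1,2,4,5,7,8)] assms(6) b assms(9)]
      pair_int(2)[OF assms(1,2,4,5,7,8)] ..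
qed

lemma unif_prob: "prob_space (uniform_measure lborel {0..1::real})"
  by (intro prob_space_uniform_measure) auto

lemma unif_int:
  assumes "0 \<le> p" "p \<le> (1::real)"
  shows "integral\<^sup>L (uniform_measure lborel {0..1::real}) (\<lambda>y. if y < p then 1 else 0) = p"
    and "integrable (uniform_measure lborel {0..1::real}) (\<lambda>y. if y < p then 1 else 0 :: real)"
proof -
  interpret prob_space "uniform_measure lborel {0..1::real}" by (rule unif_prob)
  have e: "(\<lambda>y::real. if y < p then 1 else 0 :: real) = indicator {..<p}"
    by (auto simp: indicator_def)
  have "{0..1} \<inter> {..<p} = {0..<p}" using assms by auto
  then show "integral\<^sup>L (uniform_measure lborel {0..1::real}) (\<lambda>y. if y < p then 1 else 0) = p"
    unfolding e using assms by simp
  show "integrable (uniform_measure lborel {0..1::real}) (\<lambda>y. if y < p then 1 else 0 :: real)"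
    unfolding e by (intro integrable_real_indicator) (auto simp: emeasure_eq_measure)
qed

lemma bern_int:
  assumes "0 \<le> q" "q \<le> (1::real)"
  shows "integral\<^sup>L (measure_pmf (bernoulli_pmf q)) (\<lambda>b. if b then 1 else 0) = q"
    and "integrable (measure_pmf (bernoulli_pmf q)) (\<lambda>b. if b then 1 else 0 :: real)"
  using assms by (simp_all add: integrable_measure_pmf_finite)

definition Zf :: "real \<Rightarrow> 'u \<Rightarrow> ('u \<Rightarrow> real) \<Rightarrow> real" where
  "Zf p v h = (if h v < p then 1 else 0)"

definition cnt :: "'i set \<Rightarrow> ('i \<Rightarrow> 'u) \<Rightarrow> 'u \<Rightarrow> ('i \<Rightarrow> bool) \<Rightarrow> real" where
  "cnt I key v c = (\<Sum>i\<in>I. if key i = v \<and> c i then 1 else 0)"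

lemma sum_ind_card:
  assumes "finite I"
  shows "(\<Sum>i\<in>I. if P i then 1 else 0 :: real) = real (card {i\<in>I. P i})"
  using assms by (simp add: sum.inter_filter[symmetric])

lemma sum_if_const:
  assumes "finite I"
  shows "(\<Sum>i\<in>I. if P i then c else 0 :: real) = c * real (card {i\<in>I. P i})"
  using assms by (simp add: sum.inter_filter[symmetric])

lemma hash_lemmas:
  fixes U :: "'u set"
  assumes "finite U" "v \<in> U" "w \<in> U" "0 \<le> p" "p \<le> 1"
  defines "N \<equiv> PiM U (\<lambda>_. uniform_measure lborel {0..1::real})"
  shows "integrable N (Zf p v)" "integral\<^sup>L N (Zf p v) = p"
    "integrable N (\<lambda>h. Zf p v h * Zf p w h)"
    "integral\<^sup>L N (\<lambda>h. Zf p v h * Zf p w h) = p^2 + (if v = w then p - p^2 else 0)"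
    "\<bar>Zf p v h\<bar> \<le> 1" "\<bar>Zf p v h * Zf p w h\<bar> \<le> 1"
proof -
  let ?g = "\<lambda>y::real. if y < p then 1 else 0 :: real"
  have e1: "Zf p v = (\<lambda>h. \<Prod>u\<in>{v}. ?g (h u))" by (auto simp: Zf_def)
  have e2: "(\<lambda>h. Zf p v h * Zf p w h) = (\<lambda>h. \<Prod>u\<in>{v,w}. ?g (h u))"
    by (cases "v = w") (auto simp: Zf_def)
  note P = PiM_prod_pow[OF assms(1) _ unif_prob unif_int(2)[OF assms(4,5)], folded N_def]
  show "integrable N (Zf p v)" unfolding e1 by (rule P(2)) (use assms in auto)
  show "integral\<^sup>L N (Zf p v) = p" unfolding e1 
    by (subst P(1)) (use assms in \<open>auto simp: unif_int\<close>)
  show "integrable N (\<lambda>h. Zf p v h * Zf p w h)" unfolding e2 by (rule P(2)) (use assms in auto)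
  show "integral\<^sup>L N (\<lambda>h. Zf p v h * Zf p w h) = p^2 + (if v = w then p - p^2 else 0)" unfolding e2 
    by (subst P(1)) (use assms in \<open>auto simp: unif_int power2_eq_square\<close>)
  show "\<bar>Zf p v h\<bar> \<le> 1" "\<bar>Zf p v h * Zf p w h\<bar> \<le> 1" by (auto simp: Zf_def)
qed

lemma cnt_lemmas:
  fixes I :: "'i set" and key :: "'i \<Rightarrow> 'u"
  assumes "finite I" "0 \<le> q" "q \<le> 1"
  defines "P \<equiv> PiM I (\<lambda>_. measure_pmf (bernoulli_pmf q))"
  shows "integrable P (cnt I key v)" "integral\<^sup>L P (cnt I key v) = q * real (card {i\<in>I. key i = v})"
    "integrable P (\<lambda>c. cnt I key v c * cnt I key w c)"
    "integral\<^sup>L P (\<lambda>c. cnt I key v c * cnt I key w c) =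
       q^2 * real (card {i\<in>I. key i = v}) * real (card {i\<in>I. key i = w})
       + (if v = w then (q - q^2) * real (card {i\<in>I. key i = v}) else 0)"
    "\<bar>cnt I key v c\<bar> \<le> real (card I)"
    "\<bar>cnt I key v c * cnt I key w c\<bar> \<le> real (card I) * real (card I)"
proof -
  let ?g = "\<lambda>b. if b then 1 else 0 :: real"
  note PP = PiM_prod_pow[OF assms(1) _ prob_space_measure_pmf bern_int(2)[OF assms(2,3)], folded P_def]
  have e1: "cnt I key v = (\<lambda>c. \<Sum>i\<in>I. if key i = v then \<Prod>j\<in>{i}. ?g (c j) else 0)" for v
    by (rule ext) (auto simp: cnt_def intro!: sum.cong)
  have e2: "(\<lambda>c. cnt I key v c * cnt I key w c) =
     (\<lambda>c. \<Sum>i\<in>I. \<Sum>i'\<in>I. if key i = v \<and> key i' = w then \<Prod>j\<in>{i,i'}. ?g (c j) else 0)"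
  proof (rule ext)
    fix c
    show "cnt I key v c * cnt I key w c =
      (\<Sum>i\<in>I. \<Sum>i'\<in>I. if key i = v \<and> key i' = w then \<Prod>j\<in>{i,i'}. ?g (c j) else 0)"
      unfolding cnt_def sum_product
    proof (intro sum.cong refl)
      fix i i'
      show "(if key i = v \<and> c i then 1 else 0) * (if key i' = w \<and> c i' then 1 else 0) =
        (if key i = v \<and> key i' = w then \<Prod>j\<in>{i,i'}. ?g (c j) else 0 :: real)"
        by (cases "i = i'") auto
    qed
  qed
  have int1: "integrable P (\<lambda>c. if key i = v then \<Prod>j\<in>{i}. ?g (c j) else 0)" if "i \<in> I" for i v
    using that PP(2)[of "{i}"] by (cases "key i = v") simp_all
  have int2: "integrable P (\<lambda>c. if key i = v \<and> key i' = w then \<Prod>j\<in>{i,i'}. ?g (c j) else 0)"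
    if "i \<in> I" "i' \<in> I" for i i'
  proof (cases "key i = v \<and> key i' = w")
    case True
    then show ?thesis using that PP(2)[of "{i,i'}"] by simp
  next
    case False
    then show ?thesis by (simp only: if_False integrable_zero)
  qed
  show "integrable P (cnt I key v)" unfolding e1 using int1 by auto
  show "integrable P (\<lambda>c. cnt I key v c * cnt I key w c)" unfolding e2 using int2 by auto
  have "integral\<^sup>L P (cnt I key v) = (\<Sum>i\<in>I. if key i = v then q else 0)"
    unfolding e1
  proof (subst Bochner_Integration.integral_sum, erule int1, intro sum.cong refl)
    fix i assume "i \<in> I"
    then show "integral\<^sup>L P (\<lambda>c. if key i = v then \<Prod>j\<in>{i}. ?g (c j) else 0) = (if key i = v then q else 0)"
      using PP(1)[of "{i}"] by (cases "key i = v") (simp_all add: bern_int assms)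
  qed
  also have "\<dots> = q * real (card {i\<in>I. key i = v})"
  proof -
    have "(\<Sum>i\<in>I. if key i = v then q else 0) = q * (\<Sum>i\<in>I. if key i = v then 1 else 0)"
      by (auto simp: sum_distrib_left intro!: sum.cong)
    then show ?thesis using sum_ind_card[OF assms(1), of "\<lambda>i. key i = v"] by simp
  qed
  finally show "integral\<^sup>L P (cnt I key v) = q * real (card {i\<in>I. key i = v})" .
  have "integral\<^sup>L P (\<lambda>c. cnt I key v c * cnt I key w c) =
     (\<Sum>i\<in>I. \<Sum>i'\<in>I. if key i = v \<and> key i' = w then q ^ card {i,i'} else 0)"
  proof -
    let ?F = "\<lambda>i c. \<Sum>i'\<in>I. if key i = v \<and> key i' = w then \<Prod>j\<in>{i,i'}. ?g (c j) else 0"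
    have "integral\<^sup>L P (\<lambda>c. \<Sum>i\<in>I. ?F i c) = (\<Sum>i\<in>I. integral\<^sup>L P (?F i))"
    proof (rule Bochner_Integration.integral_sum[where f="?F"])
      fix i assume "i \<in> I"
      show "integrable P (?F i)" by (rule Bochner_Integration.integrable_sum) (rule int2[OF \<open>i \<in> I\<close>])
    qed
    also have "\<dots> = (\<Sum>i\<in>I. \<Sum>i'\<in>I. if key i = v \<and> key i' = w then q ^ card {i,i'} else 0)"
    proof (intro sum.cong refl)
      fix i assume "i \<in> I"
      have "integral\<^sup>L P (?F i) = (\<Sum>i'\<in>I. integral\<^sup>L P (\<lambda>c. if key i = v \<and> key i' = w then \<Prod>j\<in>{i,i'}. ?g (c j) else 0))"
        by (rule Bochner_Integration.integral_sum) (intro int2 \<open>i \<in> I\<close>)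
      also have "\<dots> = (\<Sum>i'\<in>I. if key i = v \<and> key i' = w then q ^ card {i,i'} else 0)"
      proof (intro sum.cong refl)
        fix i' assume "i' \<in> I"
        show "integral\<^sup>L P (\<lambda>c. if key i = v \<and> key i' = w then \<Prod>j\<in>{i,i'}. ?g (c j) else 0) =
           (if key i = v \<and> key i' = w then q ^ card {i,i'} else 0)"
        proof (cases "key i = v \<and> key i' = w")
          case True
          then show ?thesis using PP(1)[of "{i,i'}"] \<open>i \<in> I\<close> \<open>i' \<in> I\<close> by (simp add: bern_int assms)
        next
          case False
          then show ?thesis by (simp only: False if_False integral_zero)
        qed
      qed
      finally show "integral\<^sup>L P (?F i) = (\<Sum>i'\<in>I. if key i = v \<and> key i' = w then q ^ card {i,i'} else 0)" .
    qed
    finally show ?thesis by (simp only: e2)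
  qed
  also have "\<dots> = (\<Sum>i\<in>I. \<Sum>i'\<in>I. (if key i = v then 1 else 0) * ((if key i' = w then 1 else 0) * q^2)
       + (if i' = i then (if key i = v \<and> v = w then q - q^2 else 0) else 0))"
    by (intro sum.cong refl) (auto simp: card_insert_if power2_eq_square)
  also have "\<dots> = (\<Sum>i\<in>I. (if key i = v then 1 else 0) * (real (card {i\<in>I. key i = w}) * q^2)
       + (if key i = v \<and> v = w then q - q^2 else 0))"
    using assms(1) by (simp add: sum.distrib sum_distrib_left[symmetric] sum_distrib_right[symmetric] sum_ind_card)
  also have "\<dots> = q^2 * real (card {i\<in>I. key i = v}) * real (card {i\<in>I. key i = w})
       + (if v = w then (q - q^2) * real (card {i\<in>I. key i = v}) else 0)"
    using assms(1) by (simp add: sum.distrib sum_distrib_left[symmetric] sum_distrib_right[symmetric] sum_ind_card sum_if_const)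
  finally show "integral\<^sup>L P (\<lambda>c. cnt I key v c * cnt I key w c) =
       q^2 * real (card {i\<in>I. key i = v}) * real (card {i\<in>I. key i = w})
       + (if v = w then (q - q^2) * real (card {i\<in>I. key i = v}) else 0)" .
  have cb: "\<bar>cnt I key u c\<bar> \<le> real (card I)" for u
  proof -
    have "0 \<le> cnt I key u c" unfolding cnt_def by (intro sum_nonneg) auto
    moreover have "cnt I key u c \<le> (\<Sum>i\<in>I. 1)" unfolding cnt_def by (intro sum_mono) auto
    ultimately show ?thesis by simp
  qed
  show "\<bar>cnt I key v c\<bar> \<le> real (card I)" by (rule cb)
  show "\<bar>cnt I key v c * cnt I key w c\<bar> \<le> real (card I) * real (card I)"
    unfolding abs_mult by (intro mult_mono cb) auto
qed

lemma card_join: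
  assumes "finite I1" "finite I2" "finite U" "\<forall>i\<in>I1. J (T1 i) \<in> U" "\<forall>k\<in>I2. J (T2 k) \<in> U"
  shows "real (card (join (UBS p h c1 I1 T1 J) T1 (UBS p h c2 I2 T2 J) T2 J)) =
    (\<Sum>v\<in>U. Zf p v h * cnt I1 (\<lambda>i. J (T1 i)) v c1 * cnt I2 (\<lambda>k. J (T2 k)) v c2)"
proof -
  let ?A = "\<lambda>v. {i\<in>I1. J (T1 i) = v \<and> c1 i}"
  let ?B = "\<lambda>v. {k\<in>I2. J (T2 k) = v \<and> c2 k}"
  have "join (UBS p h c1 I1 T1 J) T1 (UBS p h c2 I2 T2 J) T2 J = (\<Union>v\<in>{v\<in>U. h v < p}. ?A v \<times> ?B v)"
    using assms(4,5) by (auto simp: join_def UBS_def)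
  then have "card (join (UBS p h c1 I1 T1 J) T1 (UBS p h c2 I2 T2 J) T2 J) = (\<Sum>v\<in>{v\<in>U. h v < p}. card (?A v \<times> ?B v))"
    using assms(1,2,3) by (simp add: card_UN_disjoint disjoint_iff)
  then have "real (card (join (UBS p h c1 I1 T1 J) T1 (UBS p h c2 I2 T2 J) T2 J)) =
     (\<Sum>v\<in>U. if h v < p then real (card (?A v)) * real (card (?B v)) else 0)"
    using assms(3) by (simp add: sum.inter_filter card_cartesian_product of_nat_sum if_distrib cong: if_cong)
  also have "\<dots> = (\<Sum>v\<in>U. Zf p v h * cnt I1 (\<lambda>i. J (T1 i)) v c1 * cnt I2 (\<lambda>k. J (T2 k)) v c2)"
    unfolding cnt_def Zf_def using assms(1,2) by (intro sum.cong refl) (simp add: sum_ind_card)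
  finally show ?thesis .
qed

theorem theorem4:
  fixes U :: "'u set" and J :: "'t \<Rightarrow> 'u"
    and I1 :: "'i set" and T1 :: "'i \<Rightarrow> 't"
    and I2 :: "'k set" and T2 :: "'k \<Rightarrow> 't"
    and \<epsilon>1 \<epsilon>2 p :: real
  assumes "finite U" "finite I1" "finite I2"
    and "\<forall>i\<in>I1. J (T1 i) \<in> U" "\<forall>k\<in>I2. J (T2 k) \<in> U"
    and "0 < \<epsilon>1" "\<epsilon>1 \<le> 1" "0 < \<epsilon>2" "\<epsilon>2 \<le> 1"
    and "max \<epsilon>1 \<epsilon>2 \<le> p" "p \<le> 1"
  shows
    "let a = freq I1 T1 J; b = freq I2 T2 J;
         \<gamma> = (\<lambda>(m::nat) (n::nat). \<Sum>v\<in>U. real (a v) ^ m * real (b v) ^ n);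
         M = sample_space U I1 (\<epsilon>1 / p) I2 (\<epsilon>2 / p);
         Jcount = (\<lambda>((h, c1), c2).
            p / (\<epsilon>1 * \<epsilon>2) * real (card (join (UBS p h c1 I1 T1 J) T1 (UBS p h c2 I2 T2 J) T2 J)))
     in var M Jcount =
          (1 / p - 1) * \<gamma> 2 2 + (1 / \<epsilon>2 - 1 / p) * \<gamma> 2 1 + (1 / \<epsilon>1 - 1 / p) * \<gamma> 1 2
          + (p / (\<epsilon>1 * \<epsilon>2) - 1 / \<epsilon>1 - 1 / \<epsilon>2 + 1 / p) * \<gamma> 1 1"
proof -
  define q1 where "q1 = \<epsilon>1 / p"
  define q2 where "q2 = \<epsilon>2 / p"
  define C where "C = p / (\<epsilon>1 * \<epsilon>2)"
  define a where "a = (\<lambda>v. real (card {i\<in>I1. J (T1 i) = v}))"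
  define b where "b = (\<lambda>v. real (card {k\<in>I2. J (T2 k) = v}))"
  let ?N = "PiM U (\<lambda>_. uniform_measure lborel {0..1::real})"
  let ?P1 = "PiM I1 (\<lambda>_. measure_pmf (bernoulli_pmf q1))"
  let ?P2 = "PiM I2 (\<lambda>_. measure_pmf (bernoulli_pmf q2))"
  let ?M = "(?N \<Otimes>\<^sub>M ?P1) \<Otimes>\<^sub>M ?P2"
  let ?c1 = "cnt I1 (\<lambda>i. J (T1 i))"
  let ?c2 = "cnt I2 (\<lambda>k. J (T2 k))"
  have p0: "0 < p" using assms(6,10) by simp
  have q1: "0 \<le> q1" "q1 \<le> 1" using assms(6,10) p0 by (auto simp: q1_def field_simps)
  have q2: "0 \<le> q2" "q2 \<le> 1" using assms(8,10) p0 by (auto simp: q2_def field_simps)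
  have pN: "prob_space ?N" by (rule prob_space_PiM) (rule unif_prob)
  have pP1: "prob_space ?P1" by (rule prob_space_PiM) (rule prob_space_measure_pmf)
  have pP2: "prob_space ?P2" by (rule prob_space_PiM) (rule prob_space_measure_pmf)
  have pM: "prob_space ?M" using pN pP1 pP2 by (intro prob_space_pair)
  interpret M: prob_space ?M by (rule pM)
  note H = hash_lemmas[OF assms(1) _ _ less_imp_le[OF p0] assms(11)]
  note K1 = cnt_lemmas[OF assms(2) q1, of "\<lambda>i. J (T1 i)"]
  note K2 = cnt_lemmas[OF assms(3) q2, of "\<lambda>k. J (T2 k)"]
  define X where "X = (\<lambda>((h,c1),c2). C * (\<Sum>v\<in>U. Zf p v h * ?c1 v c1 * ?c2 v c2))"
  define Y where "Y = (\<lambda>((h,c1),c2). C^2 * (\<Sum>v\<in>U. \<Sum>w\<in>U.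
      (Zf p v h * Zf p w h) * (?c1 v c1 * ?c1 w c1) * (?c2 v c2 * ?c2 w c2)))"
  have T1: "integrable ?M (\<lambda>((h,c1),c2). Zf p v h * ?c1 v c1 * ?c2 v c2)"
    "integral\<^sup>L ?M (\<lambda>((h,c1),c2). Zf p v h * ?c1 v c1 * ?c2 v c2) = p * (q1 * a v) * (q2 * b v)"
    if "v \<in> U" for v
    using triple_int[OF pN pP1 pP2 H(1)[OF that that] K1(1) K2(1) H(5)[OF that that] K1(5) K2(5)]
      H(2)[OF that that] K1(2) K2(2) by (simp_all add: a_def b_def)
  have T2: "integrable ?M (\<lambda>((h,c1),c2). (Zf p v h * Zf p w h) * (?c1 v c1 * ?c1 w c1) * (?c2 v c2 * ?c2 w c2))"
    "integral\<^sup>L ?M (\<lambda>((h,c1),c2). (Zf p v h * Zf p w h) * (?c1 v c1 * ?c1 w c1) * (?c2 v c2 * ?c2 w c2)) =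
      (p^2 + (if v = w then p - p^2 else 0)) *
      (q1^2 * a v * a w + (if v = w then (q1 - q1^2) * a v else 0)) *
      (q2^2 * b v * b w + (if v = w then (q2 - q2^2) * b v else 0))"
    if "v \<in> U" "w \<in> U" for v w
    using triple_int[OF pN pP1 pP2 H(3)[OF that] K1(3) K2(3) H(6)[OF that] K1(6) K2(6)]
      H(4)[OF that] K1(4) K2(4) by (simp_all add: a_def b_def)
  have XY: "(\<lambda>x. (X x)\<^sup>2) = Y"
  proof (rule ext, clarify)
    fix h c1 c2
    show "(X ((h,c1),c2))\<^sup>2 = Y ((h,c1),c2)"
      unfolding X_def Y_def by (simp add: power2_eq_square sum_product algebra_simps)
  qed
  have iX: "integrable ?M X"
    unfolding X_def using T1
    by (simp add: case_prod_unfold)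
  have iY: "integrable ?M Y"
    unfolding Y_def using T2
    by (simp add: case_prod_unfold)
  have EX: "integral\<^sup>L ?M X = C * (\<Sum>v\<in>U. p * (q1 * a v) * (q2 * b v))"
  proof -
    have "integral\<^sup>L ?M X = C * integral\<^sup>L ?M (\<lambda>x. \<Sum>v\<in>U. (\<lambda>((h,c1),c2). Zf p v h * ?c1 v c1 * ?c2 v c2) x)"
      unfolding X_def by (simp add: case_prod_unfold)
    also have "\<dots> = C * (\<Sum>v\<in>U. integral\<^sup>L ?M (\<lambda>((h,c1),c2). Zf p v h * ?c1 v c1 * ?c2 v c2))"
      using T1(1) by (subst Bochner_Integration.integral_sum) auto
    also have "\<dots> = C * (\<Sum>v\<in>U. p * (q1 * a v) * (q2 * b v))"
      using T1(2) by simp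
    finally show ?thesis .
  qed
  have EY: "integral\<^sup>L ?M Y = C^2 * (\<Sum>v\<in>U. \<Sum>w\<in>U. (p^2 + (if v = w then p - p^2 else 0)) *
      (q1^2 * a v * a w + (if v = w then (q1 - q1^2) * a v else 0)) *
      (q2^2 * b v * b w + (if v = w then (q2 - q2^2) * b v else 0)))"
  proof -
    have "integral\<^sup>L ?M Y = C^2 * integral\<^sup>L ?M (\<lambda>x. \<Sum>v\<in>U. \<Sum>w\<in>U. (\<lambda>((h,c1),c2). (Zf p v h * Zf p w h) * (?c1 v c1 * ?c1 w c1) * (?c2 v c2 * ?c2 w c2)) x)"
      unfolding Y_def by (simp add: case_prod_unfold)
    also have "\<dots> = C^2 * (\<Sum>v\<in>U. \<Sum>w\<in>U. integral\<^sup>L ?M (\<lambda>((h,c1),c2). (Zf p v h * Zf p w h) * (?c1 v c1 * ?c1 w c1) * (?c2 v c2 * ?c2 w c2)))"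
      by (simp add: T2(1))
    also have "\<dots> = C^2 * (\<Sum>v\<in>U. \<Sum>w\<in>U. (p^2 + (if v = w then p - p^2 else 0)) *
      (q1^2 * a v * a w + (if v = w then (q1 - q1^2) * a v else 0)) *
      (q2^2 * b v * b w + (if v = w then (q2 - q2^2) * b v else 0)))"
      using T2(2) by simp
    finally show ?thesis .
  qed
  define D where "D = (\<lambda>v. p * (q1^2 * a v * a v + (q1 - q1^2) * a v) * (q2^2 * b v * b v + (q2 - q2^2) * b v)
      - p^2 * q1^2 * q2^2 * (a v * b v) * (a v * b v))"
  have key: "(p^2 + (if v = w then p - p^2 else 0)) *
      (q1^2 * a v * a w + (if v = w then (q1 - q1^2) * a v else 0)) *
      (q2^2 * b v * b w + (if v = w then (q2 - q2^2) * b v else 0)) =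
      p^2 * q1^2 * q2^2 * (a v * b v) * (a w * b w) + (if v = w then D v else 0)" for v w
    by (cases "v = w") (simp_all add: D_def algebra_simps power2_eq_square)
  have EY2: "integral\<^sup>L ?M Y = C^2 * (p^2 * q1^2 * q2^2 * (\<Sum>v\<in>U. a v * b v)^2 + (\<Sum>v\<in>U. D v))"
    unfolding EY key using assms(1)
    by (simp add: sum.distrib power2_eq_square sum_product sum_distrib_left algebra_simps)
  have EX2: "(integral\<^sup>L ?M X)^2 = C^2 * (p^2 * q1^2 * q2^2 * (\<Sum>v\<in>U. a v * b v)^2)"
    unfolding EX by (simp add: sum_distrib_left[symmetric] power_mult_distrib algebra_simps)
  have var: "var ?M X = C^2 * (\<Sum>v\<in>U. D v)"
    unfolding var_def using M.variance_eq[OF iX] iY XY EY2 EX2 by (simp add: algebra_simps)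
  have per: "C^2 * D v = (1 / p - 1) * (a v ^ 2 * b v ^ 2) + (1 / \<epsilon>2 - 1 / p) * (a v ^ 2 * b v ^ 1)
      + (1 / \<epsilon>1 - 1 / p) * (a v ^ 1 * b v ^ 2)
      + (p / (\<epsilon>1 * \<epsilon>2) - 1 / \<epsilon>1 - 1 / \<epsilon>2 + 1 / p) * (a v ^ 1 * b v ^ 1)" for v
    using p0 assms(6,8) unfolding D_def C_def q1_def q2_def
    by (simp add: field_simps power2_eq_square)
  have Jc: "(\<lambda>((h, c1), c2). p / (\<epsilon>1 * \<epsilon>2) * real (card (join (UBS p h c1 I1 T1 J) T1 (UBS p h c2 I2 T2 J) T2 J))) = X"
    unfolding X_def C_def by (intro ext) (auto simp: card_join[of I1 I2 U J T1 T2, OF assms(2,3,1,4,5)] split: prod.split)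
  have Msp: "sample_space U I1 (\<epsilon>1 / p) I2 (\<epsilon>2 / p) = ?M"
    by (simp add: sample_space_def q1_def q2_def)
  have fa: "real (freq I1 T1 J v) = a v" "real (freq I2 T2 J v) = b v" for v
    by (simp_all add: freq_def a_def b_def)
  show ?thesis
    unfolding Let_def Msp Jc fa var
    by (simp add: sum_distrib_left sum.distrib per)
qed

end
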